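(* Let $n\ge 2$, let $M_n=\{1,2,\dots,n\}$, and let $\mathcal{F}\subset 2^{M_n}$ be a union-closed family (i.e. $A\cup B\in\mathcal{F}$ whenever $A,B\in\mathcal{F}$) with $\bigcup_{A\in\mathcal{F}}A=M_n$. Fix $i\in M_n$ and put $\mathcal{G}=\{A\setminus\{i\}: A\in\mathcal{F}\}$. Fix $j\in M_n\setminus\{i\}$ and let $\mathcal{G}_j=\{A\in\mathcal{G}: j\in A\}$ and $\mathcal{F}_j=\{A\in\mathcal{F}: j\in A\}$. If $\frac{|\mathcal{G}_j|}{|\mathcal{G}|}\ge c$ for some constant $c\in(0,1]$, then $$\frac{|\mathcal{F}_j|}{|\mathcal{F}|}\ge \frac{1}{1+2(1-c)/c}.$$
   Context: $|X|$ denotes the cardinality of a set $X$; $2^{M_n}$ is the power set of $M_n$. Note $\mathcal{G}$ is a set of sets, so $|\mathcal{G}|$ counts distinct sets $A\setminus\{i\}$. *)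

theory Defs
  imports "HOL-Analysis.Analysis"
begin

end

theory Submission
  imports Defs
begin

lemma fiber2:
  fixes S :: "nat set set"
  assumes "finite S"
  shows "card S \<le> 2 * card ((\<lambda>A. A - {i}) ` S)"
proof -
  have "card S = (\<Sum>b\<in>(\<lambda>A. A - {i}) ` S. card {a\<in>S. a - {i} = b})"
    using sum.image_gen[OF assms, of "\<lambda>_. (1::nat)" "\<lambda>A. A - {i}"] by simp
  also have "\<dots> \<le> (\<Sum>b\<in>(\<lambda>A. A - {i}) ` S. 2)"
  proof (rule sum_mono)
    fix b assume "b \<in> (\<lambda>A. A - {i}) ` S"
    have "{a\<in>S. a - {i} = b} \<subseteq> {b, insert i b}" by auto
    hence "card {a\<in>S. a - {i} = b} \<le> card {b, insert i b}"
      by (intro card_mono) auto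
    also have "\<dots> \<le> 2" by (simp add: card_insert_le_m1)
    finally show "card {a\<in>S. a - {i} = b} \<le> 2" .
  qed
  finally show ?thesis by simp
qed

theorem lemma1p1:
  fixes n :: nat and F :: "nat set set" and i j :: nat and c :: real
  assumes "n \<ge> 2"
    and "F \<subseteq> Pow {1..n}"
    and "\<And>A B. A \<in> F \<Longrightarrow> B \<in> F \<Longrightarrow> A \<union> B \<in> F"
    and "\<Union> F = {1..n}"
    and "i \<in> {1..n}"
    and "j \<in> {1..n} - {i}"
    and "0 < c" and "c \<le> 1"
    and "real (card {A \<in> (\<lambda>A. A - {i}) ` F. j \<in> A}) / real (card ((\<lambda>A. A - {i}) ` F)) \<ge> c"
  shows "real (card {A \<in> F. j \<in> A}) / real (card F) \<ge> 1 / (1 + 2 * (1 - c) / c)"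
proof -
  let ?p = "\<lambda>A. A - {i}"
  have fin: "finite F" using assms(2) by (meson finite_Pow_iff finite_atLeastAtMost finite_subset)
  have ne: "F \<noteq> {}" using assms(1,4) by auto
  have ji: "j \<noteq> i" using assms(6) by auto
  define g where "g = card (?p ` F)"
  define gj where "gj = card {A \<in> ?p ` F. j \<in> A}"
  define f where "f = card F"
  define fj where "fj = card {A \<in> F. j \<in> A}"
  have gpos: "g > 0" unfolding g_def using fin ne by (simp add: card_gt_0_iff)
  have e1: "{A \<in> ?p ` F. j \<in> A} = ?p ` {A \<in> F. j \<in> A}" using ji by auto
  have "gj \<le> fj" unfolding gj_def fj_def e1 by (rule card_image_le) (use fin in simp)
  have e2: "?p ` F - {A \<in> ?p ` F. j \<in> A} = ?p ` (F - {A \<in> F. j \<in> A})" using ji by auto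
  have "card (F - {A \<in> F. j \<in> A}) \<le> 2 * card (?p ` (F - {A \<in> F. j \<in> A}))"
    by (rule fiber2) (use fin in simp)
  moreover have "card (F - {A \<in> F. j \<in> A}) = f - fj" unfolding f_def fj_def
    by (rule card_Diff_subset) (use fin in auto)
  moreover have "card (?p ` F - {A \<in> ?p ` F. j \<in> A}) = g - gj" unfolding g_def gj_def
    by (rule card_Diff_subset) (use fin in auto)
  ultimately have "f - fj \<le> 2 * (g - gj)" unfolding e2 by simp
  moreover have "fj \<le> f" unfolding fj_def f_def using fin by (intro card_mono) auto
  moreover have "gj \<le> g" unfolding gj_def g_def using fin by (intro card_mono) auto
  ultimately have A: "real f - real fj \<le> 2 * (real g - real gj)"
    by (metis of_nat_diff of_nat_le_iff of_nat_mult of_nat_numeral)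
  have B: "real gj \<ge> c * real g" using assms(9) gpos unfolding g_def[symmetric] gj_def[symmetric]
    by (simp add: le_divide_eq)
  have fpos: "real f > 0" unfolding f_def using fin ne by (simp add: card_gt_0_iff)
  have C: "c * (real f - real fj) \<le> 2 * (1 - c) * real fj"
  proof -
    have "c * (real f - real fj) \<le> c * (2 * (real g - real gj))" using A assms(7) by simp
    also have "\<dots> \<le> 2 * (1 - c) * real gj" using B by (simp add: algebra_simps)
    also have "\<dots> \<le> 2 * (1 - c) * real fj" using \<open>gj \<le> fj\<close> assms(8) by (simp add: mult_left_mono)
    finally show ?thesis .
  qed
  have "1 / (1 + 2 * (1 - c) / c) = c / (2 - c)" using assms(7) by (simp add: field_simps)
  also have "\<dots> \<le> real fj / real f" using C fpos assms(7,8)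
    by (simp add: divide_simps) (simp add: algebra_simps)
  finally show ?thesis unfolding f_def fj_def .
qed

end
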